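(* Let $f:\mathbb{R}^{n_0}\to\mathbb{R}^{n_m}$ be an $m$-layer ReLU network with weights $\mathbf{W}^{(k)}\in\mathbb{R}^{n_k\times n_{k-1}}$ and biases $\bm{b}^{(k)}\in\mathbb{R}^{n_k}$, $k\in[m]$, let $\bm{x}_0\in\mathbb{R}^{n_0}$, $p\in[1,\infty]$, $\epsilon>0$, and let $\bm{l}^{(k)},\bm{u}^{(k)}\in\mathbb{R}^{n_k}$, $k\in[m-1]$, be lower and upper bounds on the pre-ReLU activations valid on $B_p(\bm{x}_0,\epsilon)$. Let $f^U,f^L:\mathbb{R}^{n_0}\to\mathbb{R}^{n_m}$ be the functions defined below. Then for all $j\in[n_m]$ and all $\bm{x}\in B_p(\bm{x}_0,\epsilon)$, $$f^L_j(\bm{x})\le f_j(\bm{x})\le f^U_j(\bm{x}).$$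
   Context: Network: $\phi_0(\bm{x})=\bm{x}$; for $k\in[m-1]$, $\phi_k(\bm{x})=\sigma(\mathbf{W}^{(k)}\phi_{k-1}(\bm{x})+\bm{b}^{(k)})$ with $\sigma(\bm{y})=\max(\bm{y},\bm{0})$ elementwise; $f(\bm{x})=\mathbf{W}^{(m)}\phi_{m-1}(\bm{x})+\bm{b}^{(m)}$, $f_j$ its $j$-th coordinate. $B_p(\bm{x}_0,\epsilon)=\{\bm{x}:\|\bm{x}-\bm{x}_0\|_p\le\epsilon\}$. Standing assumption: for each $k\in[m-1]$, $r\in[n_k]$, $\bm{l}^{(k)}_r\le\bm{u}^{(k)}_r$ and $\bm{l}^{(k)}_r\le \mathbf{W}^{(k)}_{r,:}\phi_{k-1}(\bm{x})+\bm{b}^{(k)}_r\le\bm{u}^{(k)}_r$ for all $\bm{x}\in B_p(\bm{x}_0,\epsilon)$. Index sets: $\mathcal{I}^+_k=\{r\in[n_k]:\bm{u}^{(k)}_r\ge\bm{l}^{(k)}_r\ge0\}$, $\mathcal{I}^-_k=\{r:\bm{l}^{(k)}_r\le\bm{u}^{(k)}_r\le 0\}$, $\mathcal{I}_k=\{r:\bm{l}^{(k)}_r<0<\bm{u}^{(k)}_r\}$. Let $\mathbf{D}^{(0)}=I_{n_0}$ and for $k\in[m-1]$ let $\mathbf{D}^{(k)}$ be the $n_k\times n_k$ diagonal matrix with $\mathbf{D}^{(k)}_{r,r}=\frac{\bm{u}^{(k)}_r}{\bm{u}^{(k)}_r-\bm{l}^{(k)}_r}$ if $r\in\mathcal{I}_k$,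 $1$ if $r\in\mathcal{I}^+_k$, $0$ if $r\in\mathcal{I}^-_k$. Let $\mathbf{A}^{(m-1)}=\mathbf{W}^{(m)}\mathbf{D}^{(m-1)}\in\mathbb{R}^{n_m\times n_{m-1}}$ and, for $k=m-1,m-2,\dots,1$, $\mathbf{A}^{(k-1)}=\mathbf{A}^{(k)}\mathbf{W}^{(k)}\mathbf{D}^{(k-1)}\in\mathbb{R}^{n_m\times n_{k-1}}$. For $k\in[m-1]$ define $\mathbf{T}^{(k)},\mathbf{H}^{(k)}\in\mathbb{R}^{n_k\times n_m}$ by $\mathbf{T}^{(k)}_{r,j}=\bm{l}^{(k)}_r$ if $r\in\mathcal{I}_k$ and $\mathbf{A}^{(k)}_{j,r}>0$, else $0$; $\mathbf{H}^{(k)}_{r,j}=\bm{l}^{(k)}_r$ if $r\in\mathcal{I}_k$ and $\mathbf{A}^{(k)}_{j,r}<0$, else $0$. Then $f^U_j(\bm{x})=\mathbf{A}^{(0)}_{j,:}\bm{x}+\bm{b}^{(m)}_j+\sum_{k=1}^{m-1}\mathbf{A}^{(k)}_{j,:}(\bm{b}^{(k)}-\mathbf{T}^{(k)}_{:,j})$ and $f^L_j(\bm{x})=\mathbf{A}^{(0)}_{j,:}\bm{x}+\bm{b}^{(m)}_j+\sum_{k=1}^{m-1}\mathbf{A}^{(k)}_{j,:}(\bm{b}^{(k)}-\mathbf{H}^{(k)}_{:,j})$. *)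

theory Defs
  imports "HOL-Analysis.Analysis"
begin

text \<open>Layer widths are given by n :: nat \<Rightarrow> nat (n 0 = input dim, n m = output dim).
Vectors in R^(n k) are functions nat \<Rightarrow> real, only coordinates r < n k matter (0-based indices).
W k r c is the (r,c) entry of W^(k), b k r the r-th entry of b^(k), for k = 1..m.\<close>

definition pnorm :: "ereal \<Rightarrow> nat \<Rightarrow> (nat \<Rightarrow> real) \<Rightarrow> real" where
  "pnorm p d x =
     (if p = \<infinity> then (if d = 0 then 0 else Max ((\<lambda>i. \<bar>x i\<bar>) ` {..<d}))
      else (\<Sum>i<d. \<bar>x i\<bar> powr real_of_ereal p) powr (1 / real_of_ereal p))"

definition pball :: "ereal \<Rightarrow> nat \<Rightarrow> (nat \<Rightarrow> real) \<Rightarrow> real \<Rightarrow> (nat \<Rightarrow> real) set" where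
  "pball p d x0 eps = {x. pnorm p d (\<lambda>i. x i - x0 i) \<le> eps}"

fun phi :: "(nat \<Rightarrow> nat) \<Rightarrow> (nat \<Rightarrow> nat \<Rightarrow> nat \<Rightarrow> real) \<Rightarrow> (nat \<Rightarrow> nat \<Rightarrow> real)
            \<Rightarrow> nat \<Rightarrow> (nat \<Rightarrow> real) \<Rightarrow> nat \<Rightarrow> real" where
  "phi n W b 0 x = x"
| "phi n W b (Suc k) x =
     (\<lambda>r. max 0 ((\<Sum>c<n k. W (Suc k) r c * phi n W b k x c) + b (Suc k) r))"

definition preact :: "(nat \<Rightarrow> nat) \<Rightarrow> (nat \<Rightarrow> nat \<Rightarrow> nat \<Rightarrow> real) \<Rightarrow> (nat \<Rightarrow> nat \<Rightarrow> real)
            \<Rightarrow> nat \<Rightarrow> (nat \<Rightarrow> real) \<Rightarrow> nat \<Rightarrow> real" where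
  "preact n W b k x r = (\<Sum>c<n (k - 1). W k r c * phi n W b (k - 1) x c) + b k r"

definition net :: "(nat \<Rightarrow> nat) \<Rightarrow> (nat \<Rightarrow> nat \<Rightarrow> nat \<Rightarrow> real) \<Rightarrow> (nat \<Rightarrow> nat \<Rightarrow> real)
            \<Rightarrow> nat \<Rightarrow> (nat \<Rightarrow> real) \<Rightarrow> nat \<Rightarrow> real" where
  "net n W b m x j = preact n W b m x j"

text \<open>Diagonal entries of D^(k); D^(0) = I. Index sets are tested in the order I_k, I_k^+, I_k^-.\<close>
definition Dd :: "(nat \<Rightarrow> nat \<Rightarrow> real) \<Rightarrow> (nat \<Rightarrow> nat \<Rightarrow> real) \<Rightarrow> nat \<Rightarrow> nat \<Rightarrow> real" where
  "Dd l u k r =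
     (if k = 0 then 1
      else if l k r < 0 \<and> 0 < u k r then u k r / (u k r - l k r)
      else if 0 \<le> l k r then 1
      else 0)"

function Amat :: "(nat \<Rightarrow> nat) \<Rightarrow> (nat \<Rightarrow> nat \<Rightarrow> nat \<Rightarrow> real) \<Rightarrow> (nat \<Rightarrow> nat \<Rightarrow> real)
            \<Rightarrow> (nat \<Rightarrow> nat \<Rightarrow> real) \<Rightarrow> nat \<Rightarrow> nat \<Rightarrow> nat \<Rightarrow> nat \<Rightarrow> real" where
  "Amat n W l u m k =
     (if m - 1 \<le> k then (\<lambda>j r. W m j r * Dd l u (m - 1) r)
      else (\<lambda>j c. (\<Sum>r<n (Suc k). Amat n W l u m (Suc k) j r * W (Suc k) r c) * Dd l u k c))"
  by pat_completeness auto
termination by (relation "Wellfounded.measure (\<lambda>(n, W, l, u, m, k). m - k)") auto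

definition Tmat :: "(nat \<Rightarrow> nat) \<Rightarrow> (nat \<Rightarrow> nat \<Rightarrow> nat \<Rightarrow> real) \<Rightarrow> (nat \<Rightarrow> nat \<Rightarrow> real)
            \<Rightarrow> (nat \<Rightarrow> nat \<Rightarrow> real) \<Rightarrow> nat \<Rightarrow> nat \<Rightarrow> nat \<Rightarrow> nat \<Rightarrow> real" where
  "Tmat n W l u m k r j =
     (if l k r < 0 \<and> 0 < u k r \<and> Amat n W l u m k j r > 0 then l k r else 0)"

definition Hmat :: "(nat \<Rightarrow> nat) \<Rightarrow> (nat \<Rightarrow> nat \<Rightarrow> nat \<Rightarrow> real) \<Rightarrow> (nat \<Rightarrow> nat \<Rightarrow> real)
            \<Rightarrow> (nat \<Rightarrow> nat \<Rightarrow> real) \<Rightarrow> nat \<Rightarrow> nat \<Rightarrow> nat \<Rightarrow> nat \<Rightarrow> real" where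
  "Hmat n W l u m k r j =
     (if l k r < 0 \<and> 0 < u k r \<and> Amat n W l u m k j r < 0 then l k r else 0)"

definition fU :: "(nat \<Rightarrow> nat) \<Rightarrow> (nat \<Rightarrow> nat \<Rightarrow> nat \<Rightarrow> real) \<Rightarrow> (nat \<Rightarrow> nat \<Rightarrow> real)
            \<Rightarrow> (nat \<Rightarrow> nat \<Rightarrow> real) \<Rightarrow> (nat \<Rightarrow> nat \<Rightarrow> real) \<Rightarrow> nat \<Rightarrow> (nat \<Rightarrow> real) \<Rightarrow> nat \<Rightarrow> real" where
  "fU n W b l u m x j =
     (\<Sum>c<n 0. Amat n W l u m 0 j c * x c) + b m j
     + (\<Sum>k\<in>{1..m-1}. \<Sum>r<n k. Amat n W l u m k j r * (b k r - Tmat n W l u m k r j))"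

definition fL :: "(nat \<Rightarrow> nat) \<Rightarrow> (nat \<Rightarrow> nat \<Rightarrow> nat \<Rightarrow> real) \<Rightarrow> (nat \<Rightarrow> nat \<Rightarrow> real)
            \<Rightarrow> (nat \<Rightarrow> nat \<Rightarrow> real) \<Rightarrow> (nat \<Rightarrow> nat \<Rightarrow> real) \<Rightarrow> nat \<Rightarrow> (nat \<Rightarrow> real) \<Rightarrow> nat \<Rightarrow> real" where
  "fL n W b l u m x j =
     (\<Sum>c<n 0. Amat n W l u m 0 j c * x c) + b m j
     + (\<Sum>k\<in>{1..m-1}. \<Sum>r<n k. Amat n W l u m k j r * (b k r - Hmat n W l u m k r j))"

end

theory Submission
  imports Defs
begin

definition Gm :: "(nat \<Rightarrow> nat) \<Rightarrow> (nat \<Rightarrow> nat \<Rightarrow> nat \<Rightarrow> real) \<Rightarrow> (nat \<Rightarrow> nat \<Rightarrow> real)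
            \<Rightarrow> (nat \<Rightarrow> nat \<Rightarrow> real) \<Rightarrow> nat \<Rightarrow> nat \<Rightarrow> nat \<Rightarrow> nat \<Rightarrow> real" where
  "Gm n W l u m K j c = (if m - 1 \<le> K then W m j c
      else (\<Sum>r<n (Suc K). Amat n W l u m (Suc K) j r * W (Suc K) r c))"

lemma Amat_Gm: "K \<le> m - 1 \<Longrightarrow> Amat n W l u m K j c = Gm n W l u m K j c * Dd l u K c"
proof (cases "K = m - 1")
  case True
  then show ?thesis using Amat.simps[of n W l u m K] by (simp add: Gm_def)
next
  case False
  assume "K \<le> m - 1"
  with False have "\<not> m - 1 \<le> K" by simp
  then show ?thesis using Amat.simps[of n W l u m K] by (simp add: Gm_def)
qed

lemma relu_upper:
  fixes g y lo hi :: real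
  assumes "lo \<le> y" "y \<le> hi" "lo \<le> hi"
  defines "D \<equiv> (if lo < 0 \<and> 0 < hi then hi / (hi - lo) else if 0 \<le> lo then 1 else 0)"
  shows "g * max 0 y \<le> g * D * (y - (if lo < 0 \<and> 0 < hi \<and> g * D > 0 then lo else 0))"
    and "g * D * (y - (if lo < 0 \<and> 0 < hi \<and> g * D < 0 then lo else 0)) \<le> g * max 0 y"
proof -
  have "(lo < 0 \<and> 0 < hi) \<or> 0 \<le> lo \<or> (lo < 0 \<and> hi \<le> 0)" by linarith
  then have "g * max 0 y \<le> g * D * (y - (if lo < 0 \<and> 0 < hi \<and> g * D > 0 then lo else 0))
     \<and> g * D * (y - (if lo < 0 \<and> 0 < hi \<and> g * D < 0 then lo else 0)) \<le> g * max 0 y"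
  proof (elim disjE)
    assume A: "lo < 0 \<and> 0 < hi"
    then have D: "D = hi / (hi - lo)" "D > 0" "D \<le> 1" unfolding D_def by auto
    have k1: "max 0 y \<le> D * (y - lo)"
    proof -
      have "hi - lo \<noteq> 0" using A by simp
      then have "hi / (hi - lo) * (y - lo) - y = lo * (y - hi) / (hi - lo)"
        by (simp add: field_simps)
      then have "D * (y - lo) - y = lo * (y - hi) / (hi - lo)" using D(1) by simp
      moreover have "lo * (y - hi) / (hi - lo) \<ge> 0" using A assms
        by (intro divide_nonneg_pos) (auto intro: mult_nonpos_nonpos)
      moreover have "D * (y - lo) \<ge> 0" using D assms by (intro mult_nonneg_nonneg) auto
      ultimately show ?thesis by linarith
    qed
    have k2: "D * y \<le> max 0 y"
    proof (cases "y \<ge> 0")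
      case True then show ?thesis using D mult_left_le_one_le[of y D] by (simp add: mult.commute)
    next
      case False then have "D * y < 0" using D(2) by (intro mult_pos_neg) auto
      then show ?thesis by linarith
    qed
    have gs: "g * D > 0 \<longleftrightarrow> g > 0" "g * D < 0 \<longleftrightarrow> g < 0" using D(2)
      by (auto simp: zero_less_mult_iff mult_less_0_iff)
    show ?thesis
    proof (cases "g > 0")
      case True
      have u: "g * max 0 y \<le> g * (D * (y - lo))" using True k1 by (intro mult_left_mono) auto
      have w: "g * (D * y) \<le> g * max 0 y" using True k2 by (intro mult_left_mono) auto
      have "g * D > 0" "\<not> g * D < 0" using gs True by auto
      then show ?thesis using A u w by (simp add: mult.assoc)
    next
      case False
      have u: "g * max 0 y \<le> g * (D * y)" using False k2 by (intro mult_left_mono_neg) auto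
      have w: "g * (D * (y - lo)) \<le> g * max 0 y" using False k1 by (intro mult_left_mono_neg) auto
      have "\<not> g * D > 0" using gs False by auto
      show ?thesis
      proof (cases "g < 0")
        case True
        then have "g * D < 0" using gs by auto
        then show ?thesis using A u w \<open>\<not> g * D > 0\<close> by (simp add: mult.assoc)
      next
        case F2: False
        then have "g = 0" using False by auto
        then show ?thesis by simp
      qed
    qed
  next
    assume "0 \<le> lo"
    then show ?thesis using assms unfolding D_def by auto
  next
    assume "lo < 0 \<and> hi \<le> 0"
    then show ?thesis using assms unfolding D_def by auto
  qed
  then show "g * max 0 y \<le> g * D * (y - (if lo < 0 \<and> 0 < hi \<and> g * D > 0 then lo else 0))"
    and "g * D * (y - (if lo < 0 \<and> 0 < hi \<and> g * D < 0 then lo else 0)) \<le> g * max 0 y" by auto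
qed


definition UBs where
  "UBs n W b l u m K x j = (\<Sum>c<n K. Gm n W l u m K j c * phi n W b K x c) + b m j
     + (\<Sum>k\<in>{Suc K..m-1}. \<Sum>r<n k. Amat n W l u m k j r * (b k r - Tmat n W l u m k r j))"

definition LBs where
  "LBs n W b l u m K x j = (\<Sum>c<n K. Gm n W l u m K j c * phi n W b K x c) + b m j
     + (\<Sum>k\<in>{Suc K..m-1}. \<Sum>r<n k. Amat n W l u m k j r * (b k r - Hmat n W l u m k r j))"

lemma phi_Suc_preact: "phi n W b (Suc K) x c = max 0 (preact n W b (Suc K) x c)"
  by (simp add: preact_def)

lemma lin_part:
  assumes "Suc K \<le> m - 1"
  shows "(\<Sum>c<n (Suc K). Amat n W l u m (Suc K) j c * preact n W b (Suc K) x c)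
     = (\<Sum>c<n K. Gm n W l u m K j c * phi n W b K x c)
       + (\<Sum>c<n (Suc K). Amat n W l u m (Suc K) j c * b (Suc K) c)"
proof -
  have G: "Gm n W l u m K j c' = (\<Sum>r<n (Suc K). Amat n W l u m (Suc K) j r * W (Suc K) r c')" for c'
    using assms by (simp add: Gm_def)
  have "(\<Sum>c<n (Suc K). Amat n W l u m (Suc K) j c * preact n W b (Suc K) x c)
     = (\<Sum>c<n (Suc K). \<Sum>c'<n K. Amat n W l u m (Suc K) j c * W (Suc K) c c' * phi n W b K x c')
       + (\<Sum>c<n (Suc K). Amat n W l u m (Suc K) j c * b (Suc K) c)"
    by (simp add: preact_def distrib_left sum.distrib sum_distrib_left mult.assoc)
  also have "(\<Sum>c<n (Suc K). \<Sum>c'<n K. Amat n W l u m (Suc K) j c * W (Suc K) c c' * phi n W b K x c')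
     = (\<Sum>c'<n K. Gm n W l u m K j c' * phi n W b K x c')"
    by (subst sum.swap) (simp add: G sum_distrib_right)
  finally show ?thesis .
qed

lemma step_bounds:
  assumes K: "Suc K \<le> m - 1"
    and lu: "\<And>r. r < n (Suc K) \<Longrightarrow> l (Suc K) r \<le> u (Suc K) r"
    and bd: "\<And>r. r < n (Suc K) \<Longrightarrow> l (Suc K) r \<le> preact n W b (Suc K) x r \<and> preact n W b (Suc K) x r \<le> u (Suc K) r"
  shows "UBs n W b l u m (Suc K) x j \<le> UBs n W b l u m K x j"
    and "LBs n W b l u m K x j \<le> LBs n W b l u m (Suc K) x j"
proof -
  let ?A = "\<lambda>c. Amat n W l u m (Suc K) j c"
  let ?G = "\<lambda>c. Gm n W l u m (Suc K) j c"
  let ?y = "\<lambda>c. preact n W b (Suc K) x c"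
  have AG: "?A c = ?G c * Dd l u (Suc K) c" for c using K by (intro Amat_Gm) simp
  have pu: "?G c * phi n W b (Suc K) x c \<le> ?A c * (?y c - Tmat n W l u m (Suc K) c j)"
    and pl: "?A c * (?y c - Hmat n W l u m (Suc K) c j) \<le> ?G c * phi n W b (Suc K) x c"
    if c: "c < n (Suc K)" for c
  proof -
    note r = relu_upper[of "l (Suc K) c" "?y c" "u (Suc K) c" "?G c"]
    have h: "l (Suc K) c \<le> ?y c" "?y c \<le> u (Suc K) c" "l (Suc K) c \<le> u (Suc K) c"
      using bd[OF c] lu[OF c] by auto
    have D: "Dd l u (Suc K) c = (if l (Suc K) c < 0 \<and> 0 < u (Suc K) c then u (Suc K) c / (u (Suc K) c - l (Suc K) c)
          else if 0 \<le> l (Suc K) c then 1 else 0)" by (simp add: Dd_def)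
    show "?G c * phi n W b (Suc K) x c \<le> ?A c * (?y c - Tmat n W l u m (Suc K) c j)"
      using r(1)[OF h] unfolding phi_Suc_preact AG Tmat_def D[symmetric] by simp
    show "?A c * (?y c - Hmat n W l u m (Suc K) c j) \<le> ?G c * phi n W b (Suc K) x c"
      using r(2)[OF h] unfolding phi_Suc_preact AG Hmat_def D[symmetric] by simp
  qed
  have split: "{Suc K..m-1} = insert (Suc K) {Suc (Suc K)..m-1}" using K by auto
  have sp: "(\<Sum>k\<in>{Suc K..m-1}. F k) = F (Suc K) + (\<Sum>k\<in>{Suc (Suc K)..m-1}. F k)" for F :: "nat \<Rightarrow> real"
    unfolding split by simp
  have su: "(\<Sum>c<n (Suc K). ?G c * phi n W b (Suc K) x c) \<le> (\<Sum>c<n (Suc K). ?A c * (?y c - Tmat n W l u m (Suc K) c j))"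
    by (rule sum_mono) (use pu in auto)
  have sl: "(\<Sum>c<n (Suc K). ?A c * (?y c - Hmat n W l u m (Suc K) c j)) \<le> (\<Sum>c<n (Suc K). ?G c * phi n W b (Suc K) x c)"
    by (rule sum_mono) (use pl in auto)
  have eT: "(\<Sum>c<n (Suc K). ?A c * (?y c - Tmat n W l u m (Suc K) c j))
     = (\<Sum>c<n K. Gm n W l u m K j c * phi n W b K x c) + (\<Sum>c<n (Suc K). ?A c * (b (Suc K) c - Tmat n W l u m (Suc K) c j))"
    using lin_part[OF K, where n=n and W=W and l=l and u=u and j=j and b=b and x=x] by (simp add: right_diff_distrib sum_subtractf)
  have eH: "(\<Sum>c<n (Suc K). ?A c * (?y c - Hmat n W l u m (Suc K) c j))
     = (\<Sum>c<n K. Gm n W l u m K j c * phi n W b K x c) + (\<Sum>c<n (Suc K). ?A c * (b (Suc K) c - Hmat n W l u m (Suc K) c j))"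
    using lin_part[OF K, where n=n and W=W and l=l and u=u and j=j and b=b and x=x] by (simp add: right_diff_distrib sum_subtractf)
  show "UBs n W b l u m (Suc K) x j \<le> UBs n W b l u m K x j"
    unfolding UBs_def sp[where F="\<lambda>k. \<Sum>r<n k. Amat n W l u m k j r * (b k r - Tmat n W l u m k r j)"]
    using su eT by simp
  show "LBs n W b l u m K x j \<le> LBs n W b l u m (Suc K) x j"
    unfolding LBs_def sp[where F="\<lambda>k. \<Sum>r<n k. Amat n W l u m k j r * (b k r - Hmat n W l u m k r j)"]
    using sl eH by simp
qed

theorem theorem3p5:
  fixes n :: "nat \<Rightarrow> nat" and W :: "nat \<Rightarrow> nat \<Rightarrow> nat \<Rightarrow> real" and b l u :: "nat \<Rightarrow> nat \<Rightarrow> real"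
    and m :: nat and x0 :: "nat \<Rightarrow> real" and p :: ereal and eps :: real
  assumes m: "1 \<le> m"
    and p: "1 \<le> p"
    and eps: "0 < eps"
    and lu: "\<And>k r. k \<in> {1..m-1} \<Longrightarrow> r < n k \<Longrightarrow> l k r \<le> u k r"
    and bounds: "\<And>k r x. k \<in> {1..m-1} \<Longrightarrow> r < n k \<Longrightarrow> x \<in> pball p (n 0) x0 eps \<Longrightarrow>
                   l k r \<le> preact n W b k x r \<and> preact n W b k x r \<le> u k r"
  shows "\<forall>j < n m. \<forall>x \<in> pball p (n 0) x0 eps.
           fL n W b l u m x j \<le> net n W b m x j \<and> net n W b m x j \<le> fU n W b l u m x j"
proof (intro allI impI ballI)
  fix j x assume j: "j < n m" and x: "x \<in> pball p (n 0) x0 eps"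
  have main: "d \<le> m - 1 \<Longrightarrow> net n W b m x j \<le> UBs n W b l u m (m - 1 - d) x j
     \<and> LBs n W b l u m (m - 1 - d) x j \<le> net n W b m x j" for d
  proof (induction d)
    case 0
    have e: "{Suc (m - 1)..m - 1} = {}" by auto
    have "UBs n W b l u m (m - 1) x j = net n W b m x j" "LBs n W b l u m (m - 1) x j = net n W b m x j"
      unfolding UBs_def LBs_def net_def preact_def e by (simp_all add: Gm_def)
    then show ?case by simp
  next
    case (Suc d)
    define K where "K = m - 1 - Suc d"
    have K: "Suc K \<le> m - 1" "Suc K = m - 1 - d" using Suc.prems unfolding K_def by auto
    have kk: "Suc K \<in> {1..m-1}" using K by auto
    have s1: "UBs n W b l u m (Suc K) x j \<le> UBs n W b l u m K x j"
      and s2: "LBs n W b l u m K x j \<le> LBs n W b l u m (Suc K) x j"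
      by (rule step_bounds[OF K(1)], use lu[OF kk] bounds[OF kk _ x] in auto)+
    show ?case using Suc.IH Suc.prems s1 s2 K unfolding K_def[symmetric] by auto
  qed
  from main[of "m - 1"] have
    "net n W b m x j \<le> UBs n W b l u m 0 x j \<and> LBs n W b l u m 0 x j \<le> net n W b m x j" by simp
  moreover have "Gm n W l u m 0 j c = Amat n W l u m 0 j c" for c
    using Amat_Gm[of 0 m n W l u j c] by (simp add: Dd_def)
  ultimately show "fL n W b l u m x j \<le> net n W b m x j \<and> net n W b m x j \<le> fU n W b l u m x j"
    unfolding UBs_def LBs_def fU_def fL_def by simp
qed

end
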